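(* Let $I=(N,O,\succsim)$ be a general instance, $p$ a generalized random matching and $p'$ its associated random matching for the associated instance $I'$. Then $p$ is fractionally weakly stable if and only if $p'$ is fractionally weakly stable and $p$ is non-wasteful (i.e., $p'$ respects non-wastefulness).
   Context: General instance: $N=\{1,\dots,n\}$ agents, $O=\{o_1,\dots,o_m\}$ objects ($m,n\ge1$ arbitrary), $\emptyset$ the null object; each agent $i$ has a weak order $\succsim_i$ over $O\cup\{\emptyset\}$, each object $o$ a weak order $\succsim_o$ over $N\cup\{\emptyset\}$, with either $o\succ_i\emptyset$ or $\emptyset\succ_i o$, and either $i\succ_o\emptyset$ or $\emptyset\succ_o i$. $(i,o)$ is acceptable if $o\succ_i\emptyset$ and $i\succ_o\emptyset$. A generalized random matching is an $n\times m$ nonnegative matrix with row and column sums $\le1$; write $p(\emptyset,o)=1-\sum_{i\in N}p(i,o)$. $p$ is individually rational if $p(i,o)=0$ whenever $\emptyset\succ_i o$ or $\emptyset\succ_o i$; non-wasteful if there is no acceptable $(i,o)$ with $\sum_{o':o'\succsim_i o}p(i,o')<1$ and $\sum_j p(j,o)<1$. $p$ is fractionally weakly stable if it is individually rational, non-wasteful, and for every acceptable pair $(i,o)$: $\sum_{o'\in O:o'\succsim_i o,\,o'\ne o}p(i,o')\ge\sum_{j\in N:i\succ_o j}p(j,o)+p(\emptyset,o)$. Associated instance: $D=\{d_1,\dots,d_m\}$, $\Phi=\{\phi_1,\dots,\phi_n\}$, $N'=N\cup D$, $O'=O\cup\Phi$, with weak orders (blocks best to worst, consecutive blocks strict): $i\in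 N$: objects acceptable to $i$ by $\succsim_i$, $\phi_i$, $\phi_k$ ($k\ne i$) in increasing index, objects unacceptable to $i$ by $\succsim_i$; $o_j$: agents acceptable to $o_j$ by $\succsim_{o_j}$, $d_j$, $d_k$ ($k\ne j$) in increasing index, agents unacceptable to $o_j$ by $\succsim_{o_j}$; $d_j$: $o_j$, other objects of $O$ in increasing index, then null objects with $\phi_k\succsim'_{d_j}\phi_l$ iff $k\succsim_{o_j}l$; $\phi_i$: $i$, other agents of $N$ in increasing index, then dummies with $d_k\succsim'_{\phi_i}d_l$ iff $o_k\succsim_i o_l$. Associated random matching: $p'(i,o_j)=p(i,o_j)$, $p'(d_j,\phi_i)=p(i,o_j)$, $p'(i,\phi_i)=1-\sum_o p(i,o)$, $p'(d_j,o_j)=1-\sum_i p(i,o_j)$, other entries $0$ (an $(n+m)\times(n+m)$ bistochastic matrix). A bistochastic matrix $q$ on $N'\times O'$ is fractionally weakly stable if for every $(a,c)\in N'\times O'$: $\sum_{c':c'\succsim'_a c,\,c'\ne c}q(a,c')\ge\sum_{b:a\succ'_c b}q(b,c)$. *)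

theory Defs
  imports Complex_Main
begin

(* Agents N = {1..n}, objects O = {1..m} (object o_j is index j).
   The null object / null agent is None.
   PA i x y  means  x \<succeq>_i y   (x,y :: nat option, over O \<union> {null}).
   PO j x y  means  x \<succeq>_{o_j} y (x,y :: nat option, over N \<union> {null}).
   Associated instance: N' = N \<union> D encoded as  Inl i (agent i) / Inr j (dummy d_j);
                        O' = O \<union> \<Phi> encoded as  Inl j (object o_j) / Inr i (null object phi_i). *)

definition strictly :: "('a \<Rightarrow> 'a \<Rightarrow> bool) \<Rightarrow> 'a \<Rightarrow> 'a \<Rightarrow> bool" where
  "strictly R x y \<longleftrightarrow> R x y \<and> \<not> R y x"

definition weak_order_on :: "'a set \<Rightarrow> ('a \<Rightarrow> 'a \<Rightarrow> bool) \<Rightarrow> bool" where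
  "weak_order_on A R \<longleftrightarrow>
     (\<forall>x\<in>A. \<forall>y\<in>A. R x y \<or> R y x) \<and>
     (\<forall>x\<in>A. \<forall>y\<in>A. \<forall>z\<in>A. R x y \<longrightarrow> R y z \<longrightarrow> R x z)"

definition general_instance ::
  "nat \<Rightarrow> nat \<Rightarrow> (nat \<Rightarrow> nat option \<Rightarrow> nat option \<Rightarrow> bool) \<Rightarrow>
   (nat \<Rightarrow> nat option \<Rightarrow> nat option \<Rightarrow> bool) \<Rightarrow> bool" where
  "general_instance n m PA PO \<longleftrightarrow> n \<ge> 1 \<and> m \<ge> 1 \<and>
     (\<forall>i\<in>{1..n}. weak_order_on (insert None (Some ` {1..m})) (PA i)) \<and>
     (\<forall>j\<in>{1..m}. weak_order_on (insert None (Some ` {1..n})) (PO j)) \<and>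
     (\<forall>i\<in>{1..n}. \<forall>j\<in>{1..m}. strictly (PA i) (Some j) None \<or> strictly (PA i) None (Some j)) \<and>
     (\<forall>j\<in>{1..m}. \<forall>i\<in>{1..n}. strictly (PO j) (Some i) None \<or> strictly (PO j) None (Some i))"

definition acceptable ::
  "(nat \<Rightarrow> nat option \<Rightarrow> nat option \<Rightarrow> bool) \<Rightarrow>
   (nat \<Rightarrow> nat option \<Rightarrow> nat option \<Rightarrow> bool) \<Rightarrow> nat \<Rightarrow> nat \<Rightarrow> bool" where
  "acceptable PA PO i ob \<longleftrightarrow> strictly (PA i) (Some ob) None \<and> strictly (PO ob) (Some i) None"

definition gen_random_matching :: "nat \<Rightarrow> nat \<Rightarrow> (nat \<Rightarrow> nat \<Rightarrow> real) \<Rightarrow> bool" where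
  "gen_random_matching n m p \<longleftrightarrow>
     (\<forall>i\<in>{1..n}. \<forall>j\<in>{1..m}. p i j \<ge> 0) \<and>
     (\<forall>i\<in>{1..n}. (\<Sum>j\<in>{1..m}. p i j) \<le> 1) \<and>
     (\<forall>j\<in>{1..m}. (\<Sum>i\<in>{1..n}. p i j) \<le> 1)"

definition null_prob :: "nat \<Rightarrow> (nat \<Rightarrow> nat \<Rightarrow> real) \<Rightarrow> nat \<Rightarrow> real" where
  "null_prob n p ob = 1 - (\<Sum>i\<in>{1..n}. p i ob)"

definition individually_rational ::
  "nat \<Rightarrow> nat \<Rightarrow> (nat \<Rightarrow> nat option \<Rightarrow> nat option \<Rightarrow> bool) \<Rightarrow>
   (nat \<Rightarrow> nat option \<Rightarrow> nat option \<Rightarrow> bool) \<Rightarrow> (nat \<Rightarrow> nat \<Rightarrow> real) \<Rightarrow> bool" where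
  "individually_rational n m PA PO p \<longleftrightarrow>
     (\<forall>i\<in>{1..n}. \<forall>ob\<in>{1..m}.
        (strictly (PA i) None (Some ob) \<or> strictly (PO ob) None (Some i)) \<longrightarrow> p i ob = 0)"

definition non_wasteful ::
  "nat \<Rightarrow> nat \<Rightarrow> (nat \<Rightarrow> nat option \<Rightarrow> nat option \<Rightarrow> bool) \<Rightarrow>
   (nat \<Rightarrow> nat option \<Rightarrow> nat option \<Rightarrow> bool) \<Rightarrow> (nat \<Rightarrow> nat \<Rightarrow> real) \<Rightarrow> bool" where
  "non_wasteful n m PA PO p \<longleftrightarrow>
     \<not> (\<exists>i\<in>{1..n}. \<exists>ob\<in>{1..m}. acceptable PA PO i ob \<and>
          (\<Sum>ob'\<in>{ob'\<in>{1..m}. PA i (Some ob') (Some ob)}. p i ob') < 1 \<and>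
          (\<Sum>j\<in>{1..n}. p j ob) < 1)"

definition frac_weakly_stable ::
  "nat \<Rightarrow> nat \<Rightarrow> (nat \<Rightarrow> nat option \<Rightarrow> nat option \<Rightarrow> bool) \<Rightarrow>
   (nat \<Rightarrow> nat option \<Rightarrow> nat option \<Rightarrow> bool) \<Rightarrow> (nat \<Rightarrow> nat \<Rightarrow> real) \<Rightarrow> bool" where
  "frac_weakly_stable n m PA PO p \<longleftrightarrow>
     individually_rational n m PA PO p \<and> non_wasteful n m PA PO p \<and>
     (\<forall>i\<in>{1..n}. \<forall>ob\<in>{1..m}. acceptable PA PO i ob \<longrightarrow>
        (\<Sum>ob'\<in>{ob'\<in>{1..m}. PA i (Some ob') (Some ob) \<and> ob' \<noteq> ob}. p i ob')
          \<ge> (\<Sum>j\<in>{j\<in>{1..n}. strictly (PO ob) (Some i) (Some j)}. p j ob) + null_prob n p ob)"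

definition block_rel :: "('x \<Rightarrow> nat) \<Rightarrow> ('x \<Rightarrow> 'x \<Rightarrow> bool) \<Rightarrow> 'x \<Rightarrow> 'x \<Rightarrow> bool" where
  "block_rel blk w x y \<longleftrightarrow> blk x < blk y \<or> (blk x = blk y \<and> w x y)"

fun pref_agent' ::
  "(nat \<Rightarrow> nat option \<Rightarrow> nat option \<Rightarrow> bool) \<Rightarrow>
   (nat \<Rightarrow> nat option \<Rightarrow> nat option \<Rightarrow> bool) \<Rightarrow> nat + nat \<Rightarrow> nat + nat \<Rightarrow> nat + nat \<Rightarrow> bool" where
  "pref_agent' PA PO (Inl i) =
     block_rel
       (\<lambda>c. case c of Inl j \<Rightarrow> (if strictly (PA i) (Some j) None then 0 else 3)
                    | Inr k \<Rightarrow> (if k = i then 1 else 2))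
       (\<lambda>c c'. case (c, c') of (Inl j, Inl j') \<Rightarrow> PA i (Some j) (Some j')
                           | (Inr k, Inr k') \<Rightarrow> k \<le> k'
                           | _ \<Rightarrow> True)"
| "pref_agent' PA PO (Inr j) =
     block_rel
       (\<lambda>c. case c of Inl k \<Rightarrow> (if k = j then 0 else 1) | Inr _ \<Rightarrow> 2)
       (\<lambda>c c'. case (c, c') of (Inl k, Inl k') \<Rightarrow> k \<le> k'
                           | (Inr k, Inr l) \<Rightarrow> PO j (Some k) (Some l)
                           | _ \<Rightarrow> True)"

fun pref_object' ::
  "(nat \<Rightarrow> nat option \<Rightarrow> nat option \<Rightarrow> bool) \<Rightarrow>
   (nat \<Rightarrow> nat option \<Rightarrow> nat option \<Rightarrow> bool) \<Rightarrow> nat + nat \<Rightarrow> nat + nat \<Rightarrow> nat + nat \<Rightarrow> bool" where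
  "pref_object' PA PO (Inl j) =
     block_rel
       (\<lambda>b. case b of Inl i \<Rightarrow> (if strictly (PO j) (Some i) None then 0 else 3)
                    | Inr k \<Rightarrow> (if k = j then 1 else 2))
       (\<lambda>b b'. case (b, b') of (Inl i, Inl i') \<Rightarrow> PO j (Some i) (Some i')
                           | (Inr k, Inr k') \<Rightarrow> k \<le> k'
                           | _ \<Rightarrow> True)"
| "pref_object' PA PO (Inr i) =
     block_rel
       (\<lambda>b. case b of Inl k \<Rightarrow> (if k = i then 0 else 1) | Inr _ \<Rightarrow> 2)
       (\<lambda>b b'. case (b, b') of (Inl k, Inl k') \<Rightarrow> k \<le> k'
                           | (Inr k, Inr l) \<Rightarrow> PA i (Some k) (Some l)
                           | _ \<Rightarrow> True)"

definition agents' :: "nat \<Rightarrow> nat \<Rightarrow> (nat + nat) set" where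
  "agents' n m = Inl ` {1..n} \<union> Inr ` {1..m}"

definition objects' :: "nat \<Rightarrow> nat \<Rightarrow> (nat + nat) set" where
  "objects' n m = Inl ` {1..m} \<union> Inr ` {1..n}"

fun assoc_matching :: "nat \<Rightarrow> nat \<Rightarrow> (nat \<Rightarrow> nat \<Rightarrow> real) \<Rightarrow> nat + nat \<Rightarrow> nat + nat \<Rightarrow> real" where
  "assoc_matching n m p (Inl i) (Inl j) = p i j"
| "assoc_matching n m p (Inr j) (Inr i) = p i j"
| "assoc_matching n m p (Inl i) (Inr k) = (if k = i then 1 - (\<Sum>ob\<in>{1..m}. p i ob) else 0)"
| "assoc_matching n m p (Inr j) (Inl k) = (if k = j then 1 - (\<Sum>i\<in>{1..n}. p i j) else 0)"

definition bistochastic :: "nat \<Rightarrow> nat \<Rightarrow> (nat + nat \<Rightarrow> nat + nat \<Rightarrow> real) \<Rightarrow> bool" where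
  "bistochastic n m q \<longleftrightarrow>
     (\<forall>a\<in>agents' n m. \<forall>c\<in>objects' n m. q a c \<ge> 0) \<and>
     (\<forall>a\<in>agents' n m. (\<Sum>c\<in>objects' n m. q a c) = 1) \<and>
     (\<forall>c\<in>objects' n m. (\<Sum>a\<in>agents' n m. q a c) = 1)"

definition frac_weakly_stable' ::
  "nat \<Rightarrow> nat \<Rightarrow> (nat \<Rightarrow> nat option \<Rightarrow> nat option \<Rightarrow> bool) \<Rightarrow>
   (nat \<Rightarrow> nat option \<Rightarrow> nat option \<Rightarrow> bool) \<Rightarrow> (nat + nat \<Rightarrow> nat + nat \<Rightarrow> real) \<Rightarrow> bool" where
  "frac_weakly_stable' n m PA PO q \<longleftrightarrow> bistochastic n m q \<and>
     (\<forall>a\<in>agents' n m. \<forall>c\<in>objects' n m.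
        (\<Sum>c'\<in>{c'\<in>objects' n m. pref_agent' PA PO a c' c \<and> c' \<noteq> c}. q a c')
          \<ge> (\<Sum>b\<in>{b\<in>agents' n m. strictly (pref_object' PA PO c) a b}. q b c))"

end

theory Submission
  imports Defs
begin

lemma sum_split_LR:
  assumes "finite A" "finite B"
  shows "(\<Sum>c\<in>{c \<in> Inl ` A \<union> Inr ` B. P c}. f c) =
    (\<Sum>j\<in>A. if P (Inl j) then f (Inl j) else 0) + (\<Sum>k\<in>B. if P (Inr k) then f (Inr k) else 0)"
proof -
  have "(\<Sum>c\<in>{c \<in> Inl ` A \<union> Inr ` B. P c}. f c) = (\<Sum>c\<in>Inl ` A \<union> Inr ` B. if P c then f c else 0)"
    by (rule sum.inter_filter) (use assms in auto)
  also have "\<dots> = (\<Sum>c\<in>Inl ` A. if P c then f c else 0) + (\<Sum>c\<in>Inr ` B. if P c then f c else 0)"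
    using assms by (intro sum.union_disjoint) auto
  also have "\<dots> = (\<Sum>j\<in>A. if P (Inl j) then f (Inl j) else 0) + (\<Sum>k\<in>B. if P (Inr k) then f (Inr k) else 0)"
    by (simp add: sum.reindex)
  finally show ?thesis .
qed

lemma sum_LR:
  assumes "finite A" "finite B"
  shows "(\<Sum>c\<in>Inl ` A \<union> Inr ` B. f c) = (\<Sum>j\<in>A. f (Inl j)) + (\<Sum>k\<in>B. f (Inr k))"
  using assms by (subst sum.union_disjoint) (auto simp: sum.reindex)

lemma strictly_trans1:
  assumes "weak_order_on S R" "x\<in>S" "y\<in>S" "z\<in>S" "strictly R x y" "R y z"
  shows "strictly R x z"
  using assms unfolding weak_order_on_def strictly_def by blast

lemma strictly_trans2:
  assumes "weak_order_on S R" "x\<in>S" "y\<in>S" "z\<in>S" "R x y" "strictly R y z"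
  shows "strictly R x z"
  using assms unfolding weak_order_on_def strictly_def by blast

lemma wo_total: "weak_order_on S R \<Longrightarrow> x\<in>S \<Longrightarrow> y\<in>S \<Longrightarrow> R x y \<or> R y x"
  unfolding weak_order_on_def by blast

lemma wo_trans: "weak_order_on S R \<Longrightarrow> x\<in>S \<Longrightarrow> y\<in>S \<Longrightarrow> z\<in>S \<Longrightarrow> R x y \<Longrightarrow> R y z \<Longrightarrow> R x z"
  unfolding weak_order_on_def by blast


lemma strictly_block_rel: "strictly (block_rel blk w) x y \<longleftrightarrow> blk x < blk y \<or> (blk x = blk y \<and> w x y \<and> \<not> w y x)"
  unfolding strictly_def block_rel_def by auto

definition LH where "LH n m PA PO q a c = (\<Sum>c'\<in>{c'\<in>objects' n m. pref_agent' PA PO a c' c \<and> c' \<noteq> c}. q a c')"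
definition RH where "RH n m PA PO q a c = (\<Sum>b\<in>{b\<in>agents' n m. strictly (pref_object' PA PO c) a b}. q b c)"

lemma LH_split: "LH n m PA PO q a c =
  (\<Sum>j\<in>{1..m}. if pref_agent' PA PO a (Inl j) c \<and> Inl j \<noteq> c then q a (Inl j) else 0) +
  (\<Sum>k\<in>{1..n}. if pref_agent' PA PO a (Inr k) c \<and> Inr k \<noteq> c then q a (Inr k) else 0)"
  unfolding LH_def objects'_def by (rule sum_split_LR) auto

lemma RH_split: "RH n m PA PO q a c =
  (\<Sum>j\<in>{1..n}. if strictly (pref_object' PA PO c) a (Inl j) then q (Inl j) c else 0) +
  (\<Sum>k\<in>{1..m}. if strictly (pref_object' PA PO c) a (Inr k) then q (Inr k) c else 0)"
  unfolding RH_def agents'_def by (rule sum_split_LR) auto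

lemma fws'_iff: "frac_weakly_stable' n m PA PO q \<longleftrightarrow> bistochastic n m q \<and>
  (\<forall>i\<in>{1..n}. \<forall>j\<in>{1..m}. LH n m PA PO q (Inl i) (Inl j) \<ge> RH n m PA PO q (Inl i) (Inl j)) \<and>
  (\<forall>i\<in>{1..n}. \<forall>k\<in>{1..n}. LH n m PA PO q (Inl i) (Inr k) \<ge> RH n m PA PO q (Inl i) (Inr k)) \<and>
  (\<forall>j\<in>{1..m}. \<forall>k\<in>{1..m}. LH n m PA PO q (Inr j) (Inl k) \<ge> RH n m PA PO q (Inr j) (Inl k)) \<and>
  (\<forall>j\<in>{1..m}. \<forall>k\<in>{1..n}. LH n m PA PO q (Inr j) (Inr k) \<ge> RH n m PA PO q (Inr j) (Inr k))"
  unfolding frac_weakly_stable'_def LH_def RH_def agents'_def objects'_def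
  by (simp only: ball_Un Ball_image_comp comp_def ball_conj_distrib) blast

lemma gi_PA: "general_instance n m PA PO \<Longrightarrow> i\<in>{1..n} \<Longrightarrow> weak_order_on (insert None (Some`{1..m})) (PA i)"
  unfolding general_instance_def by blast
lemma gi_PO: "general_instance n m PA PO \<Longrightarrow> j\<in>{1..m} \<Longrightarrow> weak_order_on (insert None (Some`{1..n})) (PO j)"
  unfolding general_instance_def by blast
lemma gi_PA_dich: "general_instance n m PA PO \<Longrightarrow> i\<in>{1..n} \<Longrightarrow> j\<in>{1..m} \<Longrightarrow>
   strictly (PA i) (Some j) None \<or> strictly (PA i) None (Some j)"
  unfolding general_instance_def by blast
lemma gi_PO_dich: "general_instance n m PA PO \<Longrightarrow> i\<in>{1..n} \<Longrightarrow> j\<in>{1..m} \<Longrightarrow>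
   strictly (PO j) (Some i) None \<or> strictly (PO j) None (Some i)"
  unfolding general_instance_def by blast

lemma strictly_asym: "strictly R x y \<Longrightarrow> \<not> strictly R y x"
  unfolding strictly_def by blast

lemma grm_nonneg: "gen_random_matching n m p \<Longrightarrow> i\<in>{1..n} \<Longrightarrow> j\<in>{1..m} \<Longrightarrow> p i j \<ge> 0"
  unfolding gen_random_matching_def by blast
lemma grm_row: "gen_random_matching n m p \<Longrightarrow> i\<in>{1..n} \<Longrightarrow> (\<Sum>j\<in>{1..m}. p i j) \<le> 1"
  unfolding gen_random_matching_def by blast
lemma grm_col: "gen_random_matching n m p \<Longrightarrow> j\<in>{1..m} \<Longrightarrow> (\<Sum>i\<in>{1..n}. p i j) \<le> 1"
  unfolding gen_random_matching_def by blast

lemma bistoch: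
  assumes R: "gen_random_matching n m p"
  shows "bistochastic n m (assoc_matching n m p)"
proof -
  have nn: "\<forall>a\<in>agents' n m. \<forall>c\<in>objects' n m. assoc_matching n m p a c \<ge> 0"
    unfolding agents'_def objects'_def
    using grm_nonneg[OF R] grm_row[OF R] grm_col[OF R] by auto
  have rows: "\<forall>a\<in>agents' n m. (\<Sum>c\<in>objects' n m. assoc_matching n m p a c) = 1"
  proof
    fix a assume "a \<in> agents' n m"
    then consider i where "i\<in>{1..n}" "a = Inl i" | j where "j\<in>{1..m}" "a = Inr j"
      unfolding agents'_def by blast
    then show "(\<Sum>c\<in>objects' n m. assoc_matching n m p a c) = 1"
    proof cases
      case 1
      have "(\<Sum>k\<in>{1..n}. assoc_matching n m p (Inl i) (Inr k)) = 1 - (\<Sum>j\<in>{1..m}. p i j)"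
        using 1 by (simp add: sum.delta[where S="{1..n}"] eq_commute[of _ i])
      then show ?thesis using 1 unfolding objects'_def by (simp add: sum_LR)
    next
      case 2
      have "(\<Sum>k\<in>{1..m}. assoc_matching n m p (Inr j) (Inl k)) = 1 - (\<Sum>i\<in>{1..n}. p i j)"
        using 2 by (simp add: sum.delta[where S="{1..m}"] eq_commute[of _ j])
      then show ?thesis using 2 unfolding objects'_def by (simp add: sum_LR)
    qed
  qed
  have cols: "\<forall>c\<in>objects' n m. (\<Sum>a\<in>agents' n m. assoc_matching n m p a c) = 1"
  proof
    fix c assume "c \<in> objects' n m"
    then consider j where "j\<in>{1..m}" "c = Inl j" | i where "i\<in>{1..n}" "c = Inr i"
      unfolding objects'_def by blast
    then show "(\<Sum>a\<in>agents' n m. assoc_matching n m p a c) = 1"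
    proof cases
      case 1
      have "(\<Sum>k\<in>{1..m}. assoc_matching n m p (Inr k) (Inl j)) = 1 - (\<Sum>i\<in>{1..n}. p i j)"
        using 1 by (simp add: sum.delta'[where S="{1..m}"])
      then show ?thesis using 1 unfolding agents'_def by (simp add: sum_LR)
    next
      case 2
      have "(\<Sum>k\<in>{1..n}. assoc_matching n m p (Inl k) (Inr i)) = 1 - (\<Sum>j\<in>{1..m}. p i j)"
        using 2 by (simp add: sum.delta'[where S="{1..n}"])
      then show ?thesis using 2 unfolding agents'_def by (simp add: sum_LR)
    qed
  qed
  show ?thesis unfolding bistochastic_def using nn rows cols by blast
qed



lemma C2_self_LH: "i \<in> {1..n} \<Longrightarrow> LH n m PA PO (assoc_matching n m p) (Inl i) (Inr i) =
   (\<Sum>j\<in>{1..m}. if strictly (PA i) (Some j) None then p i j else 0)"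
  unfolding LH_split
  apply (subst sum.neutral[where A="{1..n}"])
   apply (auto simp: block_rel_def intro!: sum.cong)
  done

lemma C2_self_RH: "i \<in> {1..n} \<Longrightarrow> RH n m PA PO (assoc_matching n m p) (Inl i) (Inr i) =
   (\<Sum>j\<in>{1..m}. p i j)"
  unfolding RH_split
  apply (subst sum.neutral[where A="{1..n}"])
   apply (auto simp: block_rel_def strictly_def intro!: sum.cong)
  done


lemma C4_LH: "j \<in> {1..m} \<Longrightarrow> i \<in> {1..n} \<Longrightarrow> LH n m PA PO (assoc_matching n m p) (Inr j) (Inr i) =
   (1 - (\<Sum>l\<in>{1..n}. p l j)) + (\<Sum>l\<in>{1..n}. if PO j (Some l) (Some i) \<and> l \<noteq> i then p l j else 0)"
  unfolding LH_split
  apply (subst sum.cong[where B="{1..m}" and h="\<lambda>k. if k = j then 1 - (\<Sum>l\<in>{1..n}. p l j) else 0"])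
    apply (auto simp: block_rel_def intro!: sum.cong)
  done

lemma C4_RH: "j \<in> {1..m} \<Longrightarrow> i \<in> {1..n} \<Longrightarrow> RH n m PA PO (assoc_matching n m p) (Inr j) (Inr i) =
   (\<Sum>l\<in>{1..m}. if strictly (PA i) (Some j) (Some l) then p i l else 0)"
  unfolding RH_split
  apply (subst sum.neutral[where A="{1..n}"])
   apply (auto simp: block_rel_def strictly_def intro!: sum.cong)
  done

lemma C3_self_LH: "j \<in> {1..m} \<Longrightarrow> LH n m PA PO (assoc_matching n m p) (Inr j) (Inl j) = 0"
  unfolding LH_split
  by (auto simp: block_rel_def intro!: sum.neutral)

lemma C3_self_RH: "j \<in> {1..m} \<Longrightarrow> RH n m PA PO (assoc_matching n m p) (Inr j) (Inl j) =
   (\<Sum>l\<in>{1..n}. if \<not> strictly (PO j) (Some l) None then p l j else 0)"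
  unfolding RH_split
  apply (subst sum.neutral[where A="{1..m}"])
   apply (auto simp: block_rel_def strictly_def intro!: sum.cong)
  done

lemma C3_RH_zero: "j \<in> {1..m} \<Longrightarrow> k \<in> {1..m} \<Longrightarrow> (\<forall>l\<in>{1..n}. \<not> strictly (PO k) (Some l) None \<longrightarrow> p l k = 0) \<Longrightarrow>
   RH n m PA PO (assoc_matching n m p) (Inr j) (Inl k) = 0"
  unfolding RH_split
  apply (subst (1 2) sum.neutral)
    apply (auto simp: block_rel_def strictly_def split: if_splits)
  done

lemma C2_other_LH:
  assumes R: "gen_random_matching n m p" and "i \<in> {1..n}" "k \<in> {1..n}" "k \<noteq> i"
  shows "LH n m PA PO (assoc_matching n m p) (Inl i) (Inr k) \<ge>
   (\<Sum>j\<in>{1..m}. if strictly (PA i) (Some j) None then p i j else 0) + (1 - (\<Sum>j\<in>{1..m}. p i j))"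
proof -
  have "(\<Sum>j\<in>{1..m}. if strictly (PA i) (Some j) None then p i j else 0) \<le>
    (\<Sum>j\<in>{1..m}. if pref_agent' PA PO (Inl i) (Inl j) (Inr k) \<and> Inl j \<noteq> Inr k then assoc_matching n m p (Inl i) (Inl j) else 0)"
    using assms grm_nonneg[OF R] by (intro sum_mono) (auto simp: block_rel_def)
  moreover have "(\<Sum>k'\<in>{1..n}. if pref_agent' PA PO (Inl i) (Inr k') (Inr k) \<and> Inr k' \<noteq> Inr k then assoc_matching n m p (Inl i) (Inr k') else 0)
     = (\<Sum>k'\<in>{1..n}. if k' = i then 1 - (\<Sum>j\<in>{1..m}. p i j) else 0)"
    using assms by (intro sum.cong) (auto simp: block_rel_def)
  moreover have "(\<Sum>k'\<in>{1..n}. if k' = i then 1 - (\<Sum>j\<in>{1..m}. p i j) else 0) = 1 - (\<Sum>j\<in>{1..m}. p i j)"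
    using assms by (simp add: sum.delta)
  ultimately show ?thesis unfolding LH_split by (intro add_mono) auto
qed

lemma C1_LH_unaccA:
  assumes R: "gen_random_matching n m p" and "i \<in> {1..n}" "j \<in> {1..m}" "\<not> strictly (PA i) (Some j) None"
  shows "LH n m PA PO (assoc_matching n m p) (Inl i) (Inl j) \<ge>
   (\<Sum>l\<in>{1..m}. if strictly (PA i) (Some l) None then p i l else 0) + (1 - (\<Sum>l\<in>{1..m}. p i l))"
proof -
  have "(\<Sum>l\<in>{1..m}. if strictly (PA i) (Some l) None then p i l else 0) \<le>
    (\<Sum>l\<in>{1..m}. if pref_agent' PA PO (Inl i) (Inl l) (Inl j) \<and> Inl l \<noteq> Inl j then assoc_matching n m p (Inl i) (Inl l) else 0)"
    using assms grm_nonneg[OF R] by (intro sum_mono) (auto simp: block_rel_def)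
  moreover have "(\<Sum>k'\<in>{1..n}. if pref_agent' PA PO (Inl i) (Inr k') (Inl j) \<and> Inr k' \<noteq> Inl j then assoc_matching n m p (Inl i) (Inr k') else 0)
     = (\<Sum>k'\<in>{1..n}. if k' = i then 1 - (\<Sum>l\<in>{1..m}. p i l) else 0)"
    using assms by (intro sum.cong) (auto simp: block_rel_def)
  moreover have "(\<Sum>k'\<in>{1..n}. if k' = i then 1 - (\<Sum>l\<in>{1..m}. p i l) else 0) = 1 - (\<Sum>l\<in>{1..m}. p i l)"
    using assms by (simp add: sum.delta)
  ultimately show ?thesis unfolding LH_split by (intro add_mono) auto
qed

lemma C1_RH_unaccO:
  assumes "i \<in> {1..n}" "j \<in> {1..m}" and ni: "\<not> strictly (PO j) (Some i) None"
   and z: "\<forall>l\<in>{1..n}. \<not> strictly (PO j) (Some l) None \<longrightarrow> p l j = 0"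
  shows "RH n m PA PO (assoc_matching n m p) (Inl i) (Inl j) = 0"
proof -
  have A: "(\<Sum>l\<in>{1..n}. if strictly (pref_object' PA PO (Inl j)) (Inl i) (Inl l) then assoc_matching n m p (Inl l) (Inl j) else 0) = 0"
  proof (intro sum.neutral ballI)
    fix l assume l: "l \<in> {1..n}"
    show "(if strictly (pref_object' PA PO (Inl j)) (Inl i) (Inl l) then assoc_matching n m p (Inl l) (Inl j) else 0) = 0"
    proof (cases "strictly (PO j) (Some l) None")
      case True
      then have "\<not> strictly (pref_object' PA PO (Inl j)) (Inl i) (Inl l)"
        using ni by (simp add: strictly_block_rel)
      then show ?thesis by simp
    next
      case False
      then show ?thesis using z l by simp
    qed
  qed
  have B: "(\<Sum>k\<in>{1..m}. if strictly (pref_object' PA PO (Inl j)) (Inl i) (Inr k) then assoc_matching n m p (Inr k) (Inl j) else 0) = 0"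
  proof (intro sum.neutral ballI)
    fix k assume k: "k \<in> {1..m}"
    have "\<not> strictly (pref_object' PA PO (Inl j)) (Inl i) (Inr k)"
      using ni by (simp add: strictly_block_rel)
    then show "(if strictly (pref_object' PA PO (Inl j)) (Inl i) (Inr k) then assoc_matching n m p (Inr k) (Inl j) else 0) = 0" by simp
  qed
  show ?thesis unfolding RH_split A B by simp
qed

lemma C1_LH_acc:
  assumes G: "general_instance n m PA PO" and "i \<in> {1..n}" "j \<in> {1..m}" and acc: "strictly (PA i) (Some j) None"
  shows "LH n m PA PO (assoc_matching n m p) (Inl i) (Inl j) =
    (\<Sum>l\<in>{1..m}. if PA i (Some l) (Some j) \<and> l \<noteq> j then p i l else 0)"
proof -
  have W: "weak_order_on (insert None (Some`{1..m})) (PA i)" using gi_PA[OF G] assms by blast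
  have up: "strictly (PA i) (Some l) None" if "l \<in> {1..m}" "PA i (Some l) (Some j)" for l
    using strictly_trans2[OF W _ _ _ that(2) acc] that assms by auto
  have A: "(\<Sum>l\<in>{1..m}. if pref_agent' PA PO (Inl i) (Inl l) (Inl j) \<and> Inl l \<noteq> Inl j then assoc_matching n m p (Inl i) (Inl l) else 0)
     = (\<Sum>l\<in>{1..m}. if PA i (Some l) (Some j) \<and> l \<noteq> j then p i l else 0)"
    using acc up by (intro sum.cong) (auto simp: block_rel_def)
  have B: "(\<Sum>k\<in>{1..n}. if pref_agent' PA PO (Inl i) (Inr k) (Inl j) \<and> Inr k \<noteq> Inl j then assoc_matching n m p (Inl i) (Inr k) else 0) = 0"
    using acc by (intro sum.neutral) (auto simp: block_rel_def)
  show ?thesis unfolding LH_split A B by simp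
qed

lemma C1_RH_acc:
  assumes G: "general_instance n m PA PO" and "i \<in> {1..n}" "j \<in> {1..m}" and acc: "strictly (PO j) (Some i) None"
  shows "RH n m PA PO (assoc_matching n m p) (Inl i) (Inl j) =
    (\<Sum>l\<in>{1..n}. if strictly (PO j) (Some i) (Some l) then p l j else 0) + (1 - (\<Sum>l\<in>{1..n}. p l j))"
proof -
  have W: "weak_order_on (insert None (Some`{1..n})) (PO j)" using gi_PO[OF G] assms by blast
  have down: "strictly (PO j) (Some i) (Some l)" if "l \<in> {1..n}" "\<not> strictly (PO j) (Some l) None" for l
  proof -
    have "strictly (PO j) None (Some l)" using gi_PO_dich[OF G that(1) assms(3)] that by blast
    then show ?thesis using strictly_trans1[OF W _ _ _ acc] that assms unfolding strictly_def by auto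
  qed
  have A: "(\<Sum>l\<in>{1..n}. if strictly (pref_object' PA PO (Inl j)) (Inl i) (Inl l) then assoc_matching n m p (Inl l) (Inl j) else 0)
     = (\<Sum>l\<in>{1..n}. if strictly (PO j) (Some i) (Some l) then p l j else 0)"
    using acc down by (intro sum.cong) (auto simp: block_rel_def strictly_def)
  have B: "(\<Sum>k\<in>{1..m}. if strictly (pref_object' PA PO (Inl j)) (Inl i) (Inr k) then assoc_matching n m p (Inr k) (Inl j) else 0)
     = (\<Sum>k\<in>{1..m}. if j = k then 1 - (\<Sum>l\<in>{1..n}. p l j) else 0)"
    using acc by (intro sum.cong) (auto simp: block_rel_def strictly_def)
  have C: "(\<Sum>k\<in>{1..m}. if j = k then 1 - (\<Sum>l\<in>{1..n}. p l j) else 0) = 1 - (\<Sum>l\<in>{1..n}. p l j)"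
    using assms by (simp add: sum.delta)
  show ?thesis unfolding RH_split A B C ..
qed

lemma LH_nonneg: "bistochastic n m q \<Longrightarrow> a \<in> agents' n m \<Longrightarrow> LH n m PA PO q a c \<ge> 0"
  unfolding LH_def bistochastic_def by (intro sum_nonneg) auto

lemma RH_le1: "bistochastic n m q \<Longrightarrow> c \<in> objects' n m \<Longrightarrow> RH n m PA PO q a c \<le> 1"
proof -
  assume b: "bistochastic n m q" and c: "c \<in> objects' n m"
  have fin: "finite (agents' n m)" unfolding agents'_def by auto
  have "RH n m PA PO q a c \<le> (\<Sum>b\<in>agents' n m. q b c)"
    unfolding RH_def using b c fin unfolding bistochastic_def by (intro sum_mono2) auto
  also have "\<dots> = 1" using b c unfolding bistochastic_def by blast
  finally show ?thesis .
qed


lemma IR_iff: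
  assumes G: "general_instance n m PA PO"
  shows "individually_rational n m PA PO p \<longleftrightarrow>
    (\<forall>i\<in>{1..n}. \<forall>j\<in>{1..m}. \<not> strictly (PA i) (Some j) None \<longrightarrow> p i j = 0) \<and>
    (\<forall>i\<in>{1..n}. \<forall>j\<in>{1..m}. \<not> strictly (PO j) (Some i) None \<longrightarrow> p i j = 0)"
proof -
  have a: "strictly (PA i) None (Some j) \<longleftrightarrow> \<not> strictly (PA i) (Some j) None" if "i\<in>{1..n}" "j\<in>{1..m}" for i j
    using gi_PA_dich[OF G that] strictly_asym by metis
  have b: "strictly (PO j) None (Some i) \<longleftrightarrow> \<not> strictly (PO j) (Some i) None" if "i\<in>{1..n}" "j\<in>{1..m}" for i j
    using gi_PO_dich[OF G that] strictly_asym by metis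
  show ?thesis unfolding individually_rational_def using a b by (auto simp del: atLeastAtMost_iff)
qed

lemma sum_if_zero: "(\<And>l. l \<in> A \<Longrightarrow> \<not> P l \<Longrightarrow> f l = 0) \<Longrightarrow> (\<Sum>l\<in>A. if P l then f l else (0::real)) = sum f A"
  by (intro sum.cong) auto

lemma zero_from_sum:
  assumes "finite A" "(\<Sum>l\<in>A. if P l then f l else (0::real)) \<le> 0" "\<And>l. l \<in> A \<Longrightarrow> f l \<ge> 0"
    "l \<in> A" "P l"
  shows "f l = 0"
proof -
  have "\<forall>l\<in>A. (if P l then f l else 0) = 0"
    using assms by (subst sum_nonneg_eq_0_iff[symmetric]) (auto intro!: sum_nonneg antisym)
  then show ?thesis using assms by auto
qed

lemma C4_acc:
  assumes G: "general_instance n m PA PO" and R: "gen_random_matching n m p"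
    and i: "i \<in> {1..n}" and j: "j \<in> {1..m}"
    and st: "(\<Sum>l\<in>{1..m}. if PA i (Some l) (Some j) \<and> l \<noteq> j then p i l else 0) \<ge>
             (\<Sum>l\<in>{1..n}. if strictly (PO j) (Some i) (Some l) then p l j else 0) + (1 - (\<Sum>l\<in>{1..n}. p l j))"
  shows "(1 - (\<Sum>l\<in>{1..n}. p l j)) + (\<Sum>l\<in>{1..n}. if PO j (Some l) (Some i) \<and> l \<noteq> i then p l j else 0) \<ge>
         (\<Sum>l\<in>{1..m}. if strictly (PA i) (Some j) (Some l) then p i l else 0)"
proof -
  have WA: "weak_order_on (insert None (Some`{1..m})) (PA i)" using gi_PA[OF G] i by blast
  have WO: "weak_order_on (insert None (Some`{1..n})) (PO j)" using gi_PO[OF G] j by blast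
  have rs: "(\<Sum>l\<in>{1..m}. p i l) = (\<Sum>l\<in>{1..m}. if PA i (Some l) (Some j) \<and> l \<noteq> j then p i l else 0)
      + (\<Sum>l\<in>{1..m}. if l = j then p i l else 0) + (\<Sum>l\<in>{1..m}. if strictly (PA i) (Some j) (Some l) then p i l else 0)"
  proof -
    have "(\<Sum>l\<in>{1..m}. p i l) = (\<Sum>l\<in>{1..m}. (if PA i (Some l) (Some j) \<and> l \<noteq> j then p i l else 0)
      + (if l = j then p i l else 0) + (if strictly (PA i) (Some j) (Some l) then p i l else 0))"
    proof (intro sum.cong refl)
      fix l assume l: "l \<in> {1..m}"
      have "PA i (Some l) (Some j) \<or> PA i (Some j) (Some l)" using wo_total[OF WA] l j by blast
      then show "p i l = (if PA i (Some l) (Some j) \<and> l \<noteq> j then p i l else 0)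
      + (if l = j then p i l else 0) + (if strictly (PA i) (Some j) (Some l) then p i l else 0)"
        unfolding strictly_def by auto
    qed
    then show ?thesis by (simp add: sum.distrib)
  qed
  have cs: "(\<Sum>l\<in>{1..n}. p l j) = (\<Sum>l\<in>{1..n}. if PO j (Some l) (Some i) \<and> l \<noteq> i then p l j else 0)
      + (\<Sum>l\<in>{1..n}. if l = i then p l j else 0) + (\<Sum>l\<in>{1..n}. if strictly (PO j) (Some i) (Some l) then p l j else 0)"
  proof -
    have "(\<Sum>l\<in>{1..n}. p l j) = (\<Sum>l\<in>{1..n}. (if PO j (Some l) (Some i) \<and> l \<noteq> i then p l j else 0)
      + (if l = i then p l j else 0) + (if strictly (PO j) (Some i) (Some l) then p l j else 0))"
    proof (intro sum.cong refl)
      fix l assume l: "l \<in> {1..n}"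
      have "PO j (Some l) (Some i) \<or> PO j (Some i) (Some l)" using wo_total[OF WO] l i by blast
      then show "p l j = (if PO j (Some l) (Some i) \<and> l \<noteq> i then p l j else 0)
      + (if l = i then p l j else 0) + (if strictly (PO j) (Some i) (Some l) then p l j else 0)"
        unfolding strictly_def by auto
    qed
    then show ?thesis by (simp add: sum.distrib)
  qed
  have d1: "(\<Sum>l\<in>{1..m}. if l = j then p i l else 0) = p i j" using j by (simp add: sum.delta)
  have d2: "(\<Sum>l\<in>{1..n}. if l = i then p l j else 0) = p i j" using i by (simp add: sum.delta)
  have r1: "(\<Sum>l\<in>{1..m}. p i l) \<le> 1" using grm_row[OF R i] .
  have c1: "(\<Sum>l\<in>{1..n}. p l j) \<le> 1" using grm_col[OF R j] .
  show ?thesis using rs cs d1 d2 r1 c1 st by linarith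
qed


theorem proposition29:
  fixes n m :: nat
    and PA PO :: "nat \<Rightarrow> nat option \<Rightarrow> nat option \<Rightarrow> bool"
    and p :: "nat \<Rightarrow> nat \<Rightarrow> real"
  assumes "general_instance n m PA PO"
    and "gen_random_matching n m p"
  shows "frac_weakly_stable n m PA PO p \<longleftrightarrow>
           frac_weakly_stable' n m PA PO (assoc_matching n m p) \<and> non_wasteful n m PA PO p"
proof -
  note G = assms(1) and R = assms(2)
  define q where "q = assoc_matching n m p"
  have BQ: "bistochastic n m q" unfolding q_def using bistoch[OF R] .
  have nn: "\<And>i j. i\<in>{1..n} \<Longrightarrow> j\<in>{1..m} \<Longrightarrow> p i j \<ge> 0" using grm_nonneg[OF R] .
  have agl: "\<And>i. i\<in>{1..n} \<Longrightarrow> Inl i \<in> agents' n m" "\<And>j. j\<in>{1..m} \<Longrightarrow> Inr j \<in> agents' n m"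
    unfolding agents'_def by auto
  have obl: "\<And>j. j\<in>{1..m} \<Longrightarrow> Inl j \<in> objects' n m" "\<And>i. i\<in>{1..n} \<Longrightarrow> Inr i \<in> objects' n m"
    unfolding objects'_def by auto
  have filt: "\<And>A P f. finite A \<Longrightarrow> (\<Sum>x\<in>{x\<in>A. P x}. f x) = (\<Sum>x\<in>A. if P x then f x else (0::real))"
    by (rule sum.inter_filter)
  have stab_iff: "(\<Sum>ob'\<in>{ob'\<in>{1..m}. PA i (Some ob') (Some ob) \<and> ob' \<noteq> ob}. p i ob')
          \<ge> (\<Sum>j\<in>{j\<in>{1..n}. strictly (PO ob) (Some i) (Some j)}. p j ob) + null_prob n p ob
       \<longleftrightarrow> LH n m PA PO q (Inl i) (Inl ob) \<ge> RH n m PA PO q (Inl i) (Inl ob)"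
    if "i\<in>{1..n}" "ob\<in>{1..m}" "acceptable PA PO i ob" for i ob
    using that unfolding q_def acceptable_def null_prob_def sum.inter_filter[OF finite_atLeastAtMost]
    by (simp add: C1_LH_acc[OF G] C1_RH_acc[OF G])
  show ?thesis
  proof
    assume F: "frac_weakly_stable n m PA PO p"
    have IR: "individually_rational n m PA PO p" and NW: "non_wasteful n m PA PO p"
      using F unfolding frac_weakly_stable_def by auto
    have IRA: "\<And>i j. i\<in>{1..n} \<Longrightarrow> j\<in>{1..m} \<Longrightarrow> \<not> strictly (PA i) (Some j) None \<Longrightarrow> p i j = 0"
      and IRO: "\<And>i j. i\<in>{1..n} \<Longrightarrow> j\<in>{1..m} \<Longrightarrow> \<not> strictly (PO j) (Some i) None \<Longrightarrow> p i j = 0"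
      using IR unfolding IR_iff[OF G] by auto
    have rowacc: "(\<Sum>l\<in>{1..m}. if strictly (PA i) (Some l) None then p i l else 0) = (\<Sum>l\<in>{1..m}. p i l)"
      if "i\<in>{1..n}" for i using IRA that by (intro sum_if_zero) auto
    have c1: "\<forall>i\<in>{1..n}. \<forall>j\<in>{1..m}. LH n m PA PO q (Inl i) (Inl j) \<ge> RH n m PA PO q (Inl i) (Inl j)"
    proof (intro ballI)
      fix i j assume i: "i\<in>{1..n}" and j: "j\<in>{1..m}"
      show "LH n m PA PO q (Inl i) (Inl j) \<ge> RH n m PA PO q (Inl i) (Inl j)"
      proof (cases "strictly (PO j) (Some i) None")
        case False
        then have "RH n m PA PO q (Inl i) (Inl j) = 0"
          unfolding q_def using IRO i j by (intro C1_RH_unaccO) auto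
        then show ?thesis using LH_nonneg[where PA=PA and PO=PO and c="Inl j", OF BQ agl(1)[OF i]] by linarith
      next
        case accO: True
        show ?thesis
        proof (cases "strictly (PA i) (Some j) None")
          case False
          have "LH n m PA PO q (Inl i) (Inl j) \<ge> 1"
            using C1_LH_unaccA[where PA=PA and PO=PO, OF R i j False] rowacc[OF i] unfolding q_def by simp
          then show ?thesis using RH_le1[where PA=PA and PO=PO and a="Inl i", OF BQ obl(1)[OF j]] by linarith
        next
          case True
          then have "acceptable PA PO i j" using accO unfolding acceptable_def by simp
          have "(\<Sum>ob'\<in>{ob'\<in>{1..m}. PA i (Some ob') (Some j) \<and> ob' \<noteq> j}. p i ob')
          \<ge> (\<Sum>j'\<in>{j'\<in>{1..n}. strictly (PO j) (Some i) (Some j')}. p j' j) + null_prob n p j"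
            using F i j \<open>acceptable PA PO i j\<close> unfolding frac_weakly_stable_def by blast
          then show ?thesis using stab_iff[OF i j \<open>acceptable PA PO i j\<close>] by blast
        qed
      qed
    qed
    have c2: "\<forall>i\<in>{1..n}. \<forall>k\<in>{1..n}. LH n m PA PO q (Inl i) (Inr k) \<ge> RH n m PA PO q (Inl i) (Inr k)"
    proof (intro ballI)
      fix i k assume i: "i\<in>{1..n}" and k: "k\<in>{1..n}"
      show "LH n m PA PO q (Inl i) (Inr k) \<ge> RH n m PA PO q (Inl i) (Inr k)"
      proof (cases "k = i")
        case True
        then show ?thesis unfolding q_def using C2_self_LH[where m=m and PA=PA and PO=PO and p=p, OF i] C2_self_RH[where m=m and PA=PA and PO=PO and p=p, OF i] rowacc[OF i] by simp
      next
        case False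
        have "LH n m PA PO q (Inl i) (Inr k) \<ge> 1"
          using C2_other_LH[where PA=PA and PO=PO, OF R i k False] rowacc[OF i] unfolding q_def by simp
        then show ?thesis using RH_le1[where PA=PA and PO=PO and a="Inl i", OF BQ obl(2)[OF k]] by linarith
      qed
    qed
    have c3: "\<forall>j\<in>{1..m}. \<forall>k\<in>{1..m}. LH n m PA PO q (Inr j) (Inl k) \<ge> RH n m PA PO q (Inr j) (Inl k)"
    proof (intro ballI)
      fix j k assume j: "j\<in>{1..m}" and k: "k\<in>{1..m}"
      have "RH n m PA PO q (Inr j) (Inl k) = 0" unfolding q_def using IRO j k by (intro C3_RH_zero) auto
      then show "LH n m PA PO q (Inr j) (Inl k) \<ge> RH n m PA PO q (Inr j) (Inl k)"
        using LH_nonneg[where PA=PA and PO=PO and c="Inl k", OF BQ agl(2)[OF j]] by linarith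
    qed
    have c4: "\<forall>j\<in>{1..m}. \<forall>i\<in>{1..n}. LH n m PA PO q (Inr j) (Inr i) \<ge> RH n m PA PO q (Inr j) (Inr i)"
    proof (intro ballI)
      fix j i assume j: "j\<in>{1..m}" and i: "i\<in>{1..n}"
      have WA: "weak_order_on (insert None (Some`{1..m})) (PA i)" using gi_PA[OF G] i by blast
      have WO: "weak_order_on (insert None (Some`{1..n})) (PO j)" using gi_PO[OF G] j by blast
      show "LH n m PA PO q (Inr j) (Inr i) \<ge> RH n m PA PO q (Inr j) (Inr i)"
      proof (cases "strictly (PA i) (Some j) None")
        case False
        then have nj: "strictly (PA i) None (Some j)" using gi_PA_dich[OF G i j] by blast
        have "RH n m PA PO q (Inr j) (Inr i) = 0"
          unfolding q_def C4_RH[OF j i]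
        proof (intro sum.neutral ballI)
          fix l assume l: "l \<in> {1..m}"
          show "(if strictly (PA i) (Some j) (Some l) then p i l else 0) = 0"
          proof (cases "strictly (PA i) (Some j) (Some l)")
            case True
            then have "strictly (PA i) None (Some l)"
              using strictly_trans1[OF WA _ _ _ nj] j l unfolding strictly_def by auto
            then have "p i l = 0" using IRA[OF i l] strictly_asym[of "PA i" None "Some l"] by blast
            then show ?thesis by simp
          qed simp
        qed
        then show ?thesis using LH_nonneg[where PA=PA and PO=PO and c="Inr i", OF BQ agl(2)[OF j]] by linarith
      next
        case accA: True
        show ?thesis
        proof (cases "strictly (PO j) (Some i) None")
          case False
          then have ni: "strictly (PO j) None (Some i)" using gi_PO_dich[OF G i j] by blast
          have "(\<Sum>l\<in>{1..n}. if PO j (Some l) (Some i) \<and> l \<noteq> i then p l j else 0) = (\<Sum>l\<in>{1..n}. p l j)"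
          proof (intro sum.cong refl)
            fix l assume l: "l \<in> {1..n}"
            show "(if PO j (Some l) (Some i) \<and> l \<noteq> i then p l j else 0) = p l j"
            proof (cases "strictly (PO j) (Some l) None")
              case True
              then have "strictly (PO j) (Some l) (Some i)"
                using strictly_trans1[OF WO _ _ _ True] ni i l unfolding strictly_def by auto
              then show ?thesis using True False unfolding strictly_def by auto
            next
              case False
              then show ?thesis using IRO[OF l j] by simp
            qed
          qed
          then have "LH n m PA PO q (Inr j) (Inr i) = 1" unfolding q_def C4_LH[OF j i] by simp
          then show ?thesis using RH_le1[where PA=PA and PO=PO and a="Inr j", OF BQ obl(2)[OF i]] by linarith
        next
          case True
          then have acc: "acceptable PA PO i j" using accA unfolding acceptable_def by simp
          have "LH n m PA PO q (Inl i) (Inl j) \<ge> RH n m PA PO q (Inl i) (Inl j)"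
            using c1 i j by blast
          then have st: "(\<Sum>l\<in>{1..m}. if PA i (Some l) (Some j) \<and> l \<noteq> j then p i l else 0) \<ge>
             (\<Sum>l\<in>{1..n}. if strictly (PO j) (Some i) (Some l) then p l j else 0) + (1 - (\<Sum>l\<in>{1..n}. p l j))"
            unfolding q_def C1_LH_acc[OF G i j accA] C1_RH_acc[OF G i j True] .
          show ?thesis unfolding q_def C4_LH[OF j i] C4_RH[OF j i] using C4_acc[OF G R i j st] .
        qed
      qed
    qed
    show "frac_weakly_stable' n m PA PO (assoc_matching n m p) \<and> non_wasteful n m PA PO p"
      unfolding fws'_iff q_def[symmetric] using BQ c1 c2 c3 c4 NW by blast
  next
    assume H: "frac_weakly_stable' n m PA PO (assoc_matching n m p) \<and> non_wasteful n m PA PO p"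
    then have NW: "non_wasteful n m PA PO p" by blast
    have H': "\<forall>i\<in>{1..n}. \<forall>j\<in>{1..m}. LH n m PA PO q (Inl i) (Inl j) \<ge> RH n m PA PO q (Inl i) (Inl j)"
      "\<forall>i\<in>{1..n}. \<forall>k\<in>{1..n}. LH n m PA PO q (Inl i) (Inr k) \<ge> RH n m PA PO q (Inl i) (Inr k)"
      "\<forall>j\<in>{1..m}. \<forall>k\<in>{1..m}. LH n m PA PO q (Inr j) (Inl k) \<ge> RH n m PA PO q (Inr j) (Inl k)"
      using H unfolding fws'_iff q_def[symmetric] by blast+
    have IRA: "p i j = 0" if i: "i\<in>{1..n}" and j: "j\<in>{1..m}" and na: "\<not> strictly (PA i) (Some j) None" for i j
    proof -
      have le: "(\<Sum>l\<in>{1..m}. if strictly (PA i) (Some l) None then p i l else 0) \<ge> (\<Sum>l\<in>{1..m}. p i l)"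
        using H'(2) i C2_self_LH[where m=m and PA=PA and PO=PO and p=p, OF i] C2_self_RH[where m=m and PA=PA and PO=PO and p=p, OF i] unfolding q_def by metis
      have "(\<Sum>l\<in>{1..m}. p i l) = (\<Sum>l\<in>{1..m}. (if strictly (PA i) (Some l) None then p i l else 0)
             + (if \<not> strictly (PA i) (Some l) None then p i l else 0))"
        by (intro sum.cong) auto
      then have "(\<Sum>l\<in>{1..m}. if \<not> strictly (PA i) (Some l) None then p i l else 0) \<le> 0"
        using le by (simp add: sum.distrib)
      then show ?thesis using zero_from_sum[of "{1..m}" "\<lambda>l. \<not> strictly (PA i) (Some l) None" "p i" j] nn i j na
        by auto
    qed
    have IRO: "p i j = 0" if i: "i\<in>{1..n}" and j: "j\<in>{1..m}" and na: "\<not> strictly (PO j) (Some i) None" for i j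
    proof -
      have "(\<Sum>l\<in>{1..n}. if \<not> strictly (PO j) (Some l) None then p l j else 0) \<le> 0"
        using H'(3) j C3_self_LH[where n=n and PA=PA and PO=PO and p=p, OF j] C3_self_RH[where n=n and PA=PA and PO=PO and p=p, OF j] unfolding q_def by metis
      then show ?thesis using zero_from_sum[of "{1..n}" "\<lambda>l. \<not> strictly (PO j) (Some l) None" "\<lambda>l. p l j" i] nn i j na
        by auto
    qed
    have IR: "individually_rational n m PA PO p" unfolding IR_iff[OF G] using IRA IRO by blast
    show "frac_weakly_stable n m PA PO p"
      unfolding frac_weakly_stable_def
    proof (intro conjI IR NW ballI impI)
      fix i ob assume i: "i\<in>{1..n}" and ob: "ob\<in>{1..m}" and a: "acceptable PA PO i ob"
      have "LH n m PA PO q (Inl i) (Inl ob) \<ge> RH n m PA PO q (Inl i) (Inl ob)" using H'(1) i ob by blast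
      then show "(\<Sum>ob'\<in>{ob'\<in>{1..m}. PA i (Some ob') (Some ob) \<and> ob' \<noteq> ob}. p i ob')
          \<ge> (\<Sum>j\<in>{j\<in>{1..n}. strictly (PO ob) (Some i) (Some j)}. p j ob) + null_prob n p ob"
        using stab_iff[OF i ob a] by blast
    qed
  qed
qed

end
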